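(* For $n\ge 3$ let $T_n$ be the set of all 3-element sets of proper $n$-sided one-step dice in which no two of the three dice tie, and let $I_n\subseteq T_n$ be the subset of intransitive ones. Then $\lim_{n\to\infty}|I_n|/|T_n| = 1/4$.
   Context: An $n$-sided die is a non-decreasing $n$-tuple of integers. The standard die is $P_n=(1,2,\dots,n)$. For integers $a,b$ with $1\le a\le n-1$, $2\le b\le n$, $b\notin\{a,a+1\}$, $s(a,b)$ is the die obtained from $P_n$ by replacing the face with value $a$ by $a+1$ and the face with value $b$ by $b-1$ (faces then sorted); these are the proper $n$-sided one-step dice. For dice $A=(a_i)$, $B=(b_j)$, $A>B$ ("$A$ beats $B$") means $\#\{(i,j):a_i>b_j\}>\#\{(i,j):b_j>a_i\}$ over $(i,j)\in\{1,\dots,n\}^2$; if equal, $A$ and $B$ tie. A set of three dice with no ties is intransitive if its members can be labeled $A,B,C$ with $A>B$, $B>C$, $C>A$, and transitive otherwise. *)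

theory Defs
  imports Complex_Main
begin

text \<open>An n-sided die is a non-decreasing list of integers of length n.\<close>

definition standard_die :: "nat \<Rightarrow> int list" where
  "standard_die n = [1..int n]"

definition one_step :: "nat \<Rightarrow> int \<Rightarrow> int \<Rightarrow> int list" where
  "one_step n a b = sort (map (\<lambda>x. if x = a then a + 1 else if x = b then b - 1 else x)
                              (standard_die n))"

definition proper_one_step_dice :: "nat \<Rightarrow> int list set" where
  "proper_one_step_dice n =
     {one_step n a b | a b. 1 \<le> a \<and> a \<le> int n - 1 \<and> 2 \<le> b \<and> b \<le> int n
                           \<and> b \<noteq> a \<and> b \<noteq> a + 1}"

definition wins :: "int list \<Rightarrow> int list \<Rightarrow> nat" where
  "wins A B = card {(i, j). i < length A \<and> j < length B \<and> A ! i > B ! j}"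

definition beats :: "int list \<Rightarrow> int list \<Rightarrow> bool" where
  "beats A B \<longleftrightarrow> wins A B > wins B A"

definition ties :: "int list \<Rightarrow> int list \<Rightarrow> bool" where
  "ties A B \<longleftrightarrow> wins A B = wins B A"

definition tie_free_triples :: "nat \<Rightarrow> int list set set" where
  "tie_free_triples n =
     {S. S \<subseteq> proper_one_step_dice n \<and> card S = 3 \<and>
         (\<forall>A\<in>S. \<forall>B\<in>S. A \<noteq> B \<longrightarrow> \<not> ties A B)}"

definition intransitive :: "int list set \<Rightarrow> bool" where
  "intransitive S \<longleftrightarrow> (\<exists>A B C. S = {A, B, C} \<and> beats A B \<and> beats B C \<and> beats C A)"

definition intransitive_triples :: "nat \<Rightarrow> int list set set" where
  "intransitive_triples n = {S \<in> tie_free_triples n. intransitive S}"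

end

theory Submission
  imports Defs "HOL-Library.Multiset"
begin


definition ind :: "bool \<Rightarrow> int" where "ind P = (if P then 1 else 0)"
definition psi :: "int \<Rightarrow> int \<Rightarrow> int \<Rightarrow> int" where
 "psi c d x = x - 1 - ind (c<x) - ind (d<x) + ind (c+1<x) + ind (d-1<x)"
definition wv :: "int \<Rightarrow> int \<Rightarrow> int \<Rightarrow> int \<Rightarrow> int" where
 "wv a b c d = psi c d (a+1) - psi c d a + psi c d (b-1) - psi c d b"
definition score :: "int \<Rightarrow> int \<Rightarrow> int \<Rightarrow> int \<Rightarrow> int" where
 "score a b c d = wv a b c d - wv c d a b"

definition fm :: "int \<Rightarrow> int \<Rightarrow> int \<Rightarrow> int" where
 "fm a b = (\<lambda>x. if x = a then a + 1 else if x = b then b - 1 else x)"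

lemma one_step_fm: "one_step n a b = sort (map (fm a b) [1..int n])"
  by (simp add: one_step_def standard_die_def fm_def)

lemma wins_sum: "wins A B = (\<Sum>x\<leftarrow>A. length (filter (\<lambda>y. y < x) B))"
proof -
  have e: "{(i, j). i < length A \<and> j < length B \<and> A ! i > B ! j}
        = (SIGMA i:{..<length A}. {j. j < length B \<and> B ! j < A ! i})" by auto
  have "wins A B = (\<Sum>i\<in>{..<length A}. card {j. j < length B \<and> B ! j < A ! i})"
    unfolding wins_def e by (subst card_SigmaI) auto
  also have "\<dots> = (\<Sum>i\<in>{..<length A}. length (filter (\<lambda>y. y < A ! i) B))"
    by (simp add: length_filter_conv_card)
  also have "\<dots> = (\<Sum>x\<leftarrow>A. length (filter (\<lambda>y. y < x) B))"
    by (simp add: sum_list_sum_nth atLeast0LessThan)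
  finally show ?thesis .
qed

lemma sum_list_sort: "(\<Sum>x\<leftarrow>sort xs. (h x :: 'b::comm_monoid_add)) = (\<Sum>x\<leftarrow>xs. h x)"
  by (metis mset_map mset_sort sum_mset_sum_list)

lemma length_filter_sort: "length (filter P (sort xs)) = length (filter P xs)"
  by (simp add: filter_sort)

lemma len_filter_map_upto:
  "int (length (filter P (map g [1..m]))) = (\<Sum>j\<in>{1..m}. ind (P (g j)))"
proof -
  have "length (filter P (map g [1..m])) = length (filter (P \<circ> g) [1..m])"
    by (simp add: filter_map)
  also have "\<dots> = card ({x. (P \<circ> g) x} \<inter> {1..m})"
    by (simp add: distinct_length_filter)
  also have "\<dots> = card {j\<in>{1..m}. P (g j)}"
    by (rule arg_cong[where f=card]) auto
  finally have "int (length (filter P (map g [1..m]))) = int (card {j\<in>{1..m}. P (g j)})"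
    by simp
  also have "\<dots> = (\<Sum>j\<in>{1..m}. ind (P (g j)))"
  proof -
    have "(\<Sum>j\<in>{j\<in>{1..m}. P (g j)}. (1::int)) = (\<Sum>j\<in>{1..m}. ind (P (g j)))"
      by (subst sum.inter_filter) (auto simp: ind_def)
    thus ?thesis by simp
  qed
  finally show ?thesis .
qed

lemma wins_int:
  "int (wins (one_step n a b) (one_step n c d))
     = (\<Sum>i\<in>{1..int n}. \<Sum>j\<in>{1..int n}. ind (fm c d j < fm a b i))"
proof -
  have "int (wins (one_step n a b) (one_step n c d))
     = (\<Sum>x\<leftarrow>map (fm a b) [1..int n]. int (length (filter (\<lambda>y. y < x) (map (fm c d) [1..int n]))))"
    unfolding wins_sum one_step_fm
    by (simp add: sum_list_sort length_filter_sort o_def flip: sum_list_of_nat)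
  also have "\<dots> = (\<Sum>i\<in>{1..int n}. int (length (filter (\<lambda>y. y < fm a b i) (map (fm c d) [1..int n]))))"
    by (simp add: sum_list_distinct_conv_sum_set o_def)
  also have "\<dots> = (\<Sum>i\<in>{1..int n}. \<Sum>j\<in>{1..int n}. ind (fm c d j < fm a b i))"
    by (rule sum.cong[OF refl], rule len_filter_map_upto)
  finally show ?thesis .
qed

lemma sum_fm:
  fixes h :: "int \<Rightarrow> int"
  assumes "finite S" "a \<in> S" "b \<in> S" "a \<noteq> b"
  shows "(\<Sum>i\<in>S. h (fm a b i)) = (\<Sum>i\<in>S. h i) - h a - h b + h (a+1) + h (b-1)"
proof -
  have bS: "b \<in> S - {a}" using assms by auto
  have r: "(\<Sum>i\<in>S-{a}-{b}. h (fm a b i)) = (\<Sum>i\<in>S-{a}-{b}. h i)"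
    by (rule sum.cong) (auto simp: fm_def)
  have "(\<Sum>i\<in>S. h (fm a b i)) = h (fm a b a) + (h (fm a b b) + (\<Sum>i\<in>S-{a}-{b}. h (fm a b i)))"
    using sum.remove[OF assms(1) assms(2), of "\<lambda>i. h (fm a b i)"]
          sum.remove[OF _ bS, of "\<lambda>i. h (fm a b i)"] assms(1) by simp
  moreover have "(\<Sum>i\<in>S. h i) = h a + (h b + (\<Sum>i\<in>S-{a}-{b}. h i))"
    using sum.remove[OF assms(1) assms(2), of h]
          sum.remove[OF _ bS, of h] assms(1) by simp
  ultimately show ?thesis using r assms(4) by (simp add: fm_def)
qed

lemma sum_ind: "finite S \<Longrightarrow> (\<Sum>j\<in>S. ind (P j)) = int (card {j\<in>S. P j})"
proof -
  assume f: "finite S"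
  have "(\<Sum>j\<in>{j\<in>S. P j}. (1::int)) = (\<Sum>j\<in>S. ind (P j))"
    using f by (subst sum.inter_filter) (auto simp: ind_def)
  thus ?thesis by simp
qed

lemma sumL: "1 \<le> x \<Longrightarrow> x \<le> m+1 \<Longrightarrow> (\<Sum>j\<in>{1..m}. ind (j < x)) = x - 1"
proof -
  assume "1 \<le> x" "x \<le> m+1"
  moreover have "{j\<in>{1..m}. j < x} = {1..x-1}" using \<open>x \<le> m+1\<close> by auto
  ultimately show ?thesis by (simp add: sum_ind)
qed

lemma sumR: "0 \<le> t \<Longrightarrow> t \<le> m \<Longrightarrow> (\<Sum>i\<in>{1..m}. ind (t < i)) = m - t"
proof -
  assume "0 \<le> t" "t \<le> m"
  moreover have "{i\<in>{1..m}. t < i} = {t+1..m}" using \<open>0 \<le> t\<close> by auto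
  ultimately show ?thesis by (simp add: sum_ind)
qed

definition S0 :: "nat \<Rightarrow> int" where
  "S0 n = (\<Sum>i\<in>{1..int n}. \<Sum>j\<in>{1..int n}. ind (j < i))"

definition valid :: "nat \<Rightarrow> int \<times> int \<Rightarrow> bool" where
  "valid n x \<longleftrightarrow> 1 \<le> fst x \<and> fst x \<le> int n - 1 \<and> 2 \<le> snd x \<and> snd x \<le> int n
      \<and> snd x \<noteq> fst x \<and> snd x \<noteq> fst x + 1"

lemma G_expand:
  assumes "1 \<le> c" "c \<le> m - 1" "2 \<le> d" "d \<le> m" "d \<noteq> c"
  shows "(\<Sum>j\<in>{1..m}. ind (fm c d j < x)) =
    (\<Sum>j\<in>{1..m}. ind (j < x)) - ind (c<x) - ind (d<x) + ind (c+1<x) + ind (d-1<x)"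
  using sum_fm[of "{1..m}" c d "\<lambda>j. ind (j < x)"] assms by simp

lemma wins_formula:
  assumes "valid n (a,b)" "valid n (c,d)"
  shows "int (wins (one_step n a b) (one_step n c d)) = S0 n + wv a b c d"
proof -
  define m where "m = int n"
  define G where "G x = (\<Sum>j\<in>{1..m}. ind (fm c d j < x))" for x
  have Ge: "G x = (\<Sum>j\<in>{1..m}. ind (j < x)) - ind (c<x) - ind (d<x) + ind (c+1<x) + ind (d-1<x)" for x
    unfolding G_def using assms(2) by (intro G_expand) (auto simp: valid_def m_def)
  have Gp: "1 \<le> x \<Longrightarrow> x \<le> m + 1 \<Longrightarrow> G x = psi c d x" for x
    using Ge sumL by (simp add: psi_def)
  have "int (wins (one_step n a b) (one_step n c d)) = (\<Sum>i\<in>{1..m}. G (fm a b i))"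
    unfolding wins_int G_def m_def ..
  also have "\<dots> = (\<Sum>i\<in>{1..m}. G i) - G a - G b + G (a+1) + G (b-1)"
    using assms(1) by (intro sum_fm) (auto simp: valid_def m_def)
  also have "(\<Sum>i\<in>{1..m}. G i) = S0 n - (\<Sum>i\<in>{1..m}. ind (c<i)) - (\<Sum>i\<in>{1..m}. ind (d<i))
      + (\<Sum>i\<in>{1..m}. ind (c+1<i)) + (\<Sum>i\<in>{1..m}. ind (d-1<i))"
    by (simp add: Ge S0_def m_def sum.distrib sum_subtractf)
  also have "\<dots> = S0 n"
    using assms(2) by (simp add: sumR valid_def m_def)
  finally show ?thesis
    using assms(1) Gp by (simp add: wv_def valid_def m_def)
qed



lemma psi_diff: "psi c d (x+1) - psi c d x = 1 - ind (c=x) - ind (d=x) + ind (c+1=x) + ind (d-1=x)"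
  unfolding psi_def ind_def by auto

lemma wv_eq: "wv a b c d = - ind (c=a) - ind (d=a) + ind (c+1=a) + ind (d-1=a)
   + ind (c=b-1) + ind (d=b-1) - ind (c+1=b-1) - ind (d-1=b-1)"
proof -
  have "psi c d b - psi c d (b-1) = 1 - ind (c=b-1) - ind (d=b-1) + ind (c+1=b-1) + ind (d-1=b-1)"
    using psi_diff[of c d "b-1"] by simp
  thus ?thesis using psi_diff[of c d a] unfolding wv_def by simp
qed

definition hh :: "int \<Rightarrow> int \<Rightarrow> int" where "hh x y = ind (x = y+1) - ind (x+1 = y)"

lemma score_eq: "score a b c d = hh a c - hh a (d-1) - hh (b-1) c + hh (b-1) (d-1)"
  unfolding score_def wv_eq hh_def ind_def by auto



lemma score_swap: "b \<noteq> a + 2 \<Longrightarrow> score (b-1) (a+1) c d = - score a b c d"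
  unfolding score_eq hh_def ind_def by auto

lemma score_adj: "score a b c d \<noteq> 0 \<Longrightarrow>
   \<bar>a-c\<bar> = 1 \<or> \<bar>a-(d-1)\<bar> = 1 \<or> \<bar>b-1-c\<bar> = 1 \<or> \<bar>b-1-(d-1)\<bar> = 1"
  unfolding score_eq hh_def ind_def by (auto split: if_splits)

lemma score_fam:
  assumes "y - x \<ge> 4" "z - y \<ge> 4"
  shows "score x (y+1) (x+1) (z+1) \<noteq> 0" "score (x+1) (z+1) (y+1) (z+2) \<noteq> 0"
        "score x (y+1) (y+1) (z+2) \<noteq> 0"
  using assms unfolding score_eq hh_def ind_def by auto



definition D :: "nat \<Rightarrow> int \<times> int \<Rightarrow> int list" where "D n x = one_step n (fst x) (snd x)"
definition sc :: "int \<times> int \<Rightarrow> int \<times> int \<Rightarrow> int" where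
  "sc x y = score (fst x) (snd x) (fst y) (snd y)"
definition Vs :: "nat \<Rightarrow> (int \<times> int) set" where "Vs n = {x. valid n x}"

lemma Vs_sub: "Vs n \<subseteq> {1..int n} \<times> {1..int n}"
  by (auto simp: Vs_def valid_def)

lemma finite_Vs: "finite (Vs n)"
  by (rule finite_subset[OF Vs_sub]) auto

lemma sc_anti: "sc y x = - sc x y"
  by (simp add: sc_def score_def)

lemma sc_self: "sc x x = 0"
  by (simp add: sc_def score_def)

lemma wins_diff: "x \<in> Vs n \<Longrightarrow> y \<in> Vs n \<Longrightarrow>
   int (wins (D n x) (D n y)) - int (wins (D n y) (D n x)) = sc x y"
  using wins_formula[of n "fst x" "snd x" "fst y" "snd y"]
        wins_formula[of n "fst y" "snd y" "fst x" "snd x"]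
  by (simp add: Vs_def D_def sc_def score_def)

lemma beats_sc: "x \<in> Vs n \<Longrightarrow> y \<in> Vs n \<Longrightarrow> beats (D n x) (D n y) \<longleftrightarrow> sc x y > 0"
  using wins_diff[of x n y] of_nat_less_iff[of "wins (D n y) (D n x)" "wins (D n x) (D n y)", where 'a=int]
  unfolding beats_def by linarith

lemma ties_sc: "x \<in> Vs n \<Longrightarrow> y \<in> Vs n \<Longrightarrow> ties (D n x) (D n y) \<longleftrightarrow> sc x y = 0"
  using wins_diff[of x n y] of_nat_eq_iff[of "wins (D n x) (D n y)" "wins (D n y) (D n x)", where 'a=int]
  unfolding ties_def by linarith

lemma len_filter_one_step:
  assumes "valid n (a,b)" "1 \<le> t" "t \<le> int n + 1"
  shows "int (length (filter (\<lambda>y. y < t) (one_step n a b))) = psi a b t"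
proof -
  have "int (length (filter (\<lambda>y. y < t) (one_step n a b)))
        = (\<Sum>j\<in>{1..int n}. ind (fm a b j < t))"
    unfolding one_step_fm length_filter_sort by (rule len_filter_map_upto)
  also have "\<dots> = (\<Sum>j\<in>{1..int n}. ind (j < t)) - ind (a<t) - ind (b<t) + ind (a+1<t) + ind (b-1<t)"
    using assms(1) by (intro G_expand) (auto simp: valid_def)
  also have "\<dots> = psi a b t" using sumL[OF assms(2,3)] by (simp add: psi_def)
  finally show ?thesis .
qed

lemma psi_simple: "psi a b t = t - 1 - ind (t = a+1) + ind (t = b)"
  unfolding psi_def ind_def by auto

lemma inj_D: "inj_on (D n) (Vs n)"
proof (rule inj_onI)
  fix x y assume x: "x \<in> Vs n" and y: "y \<in> Vs n" and e: "D n x = D n y"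
  obtain a b where xa: "x = (a,b)" by (cases x)
  obtain c d where yc: "y = (c,d)" by (cases y)
  have va: "valid n (a,b)" and vc: "valid n (c,d)" using x y xa yc by (auto simp: Vs_def)
  have eq: "psi a b t = psi c d t" if "1 \<le> t" "t \<le> int n + 1" for t
    using len_filter_one_step[OF va that] len_filter_one_step[OF vc that] e xa yc
    by (simp add: D_def)
  have r: "a \<ge> 1" "a \<le> int n - 1" "b \<ge> 2" "b \<le> int n" "b \<noteq> a" "b \<noteq> a+1"
          "c \<ge> 1" "c \<le> int n - 1" "d \<ge> 2" "d \<le> int n" "d \<noteq> c" "d \<noteq> c+1"
    using va vc by (auto simp: valid_def)
  have e1: "psi a b (a+1) = psi c d (a+1)" and e2: "psi a b b = psi c d b"
    using eq r by auto
  have z: "ind (a+1 = a+1) = 1" "ind (a+1 = b) = 0" using r by (auto simp: ind_def)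
  have ac: "a = c" using e1 z apply (simp add: psi_simple) using z apply (simp add: ind_def split: if_splits)
    done
  have z2: "ind (b = a+1) = 0" "ind (b = b) = 1" using r by (auto simp: ind_def)
  have "b = d" using e2 z2 apply (simp add: psi_simple) apply (simp add: ind_def split: if_splits)
    done
  with ac have "a = c \<and> b = d" by simp
  thus "x = y" using xa yc by simp
qed

lemma pod: "proper_one_step_dice n = D n ` Vs n"
  unfolding proper_one_step_dice_def D_def Vs_def valid_def
  apply (rule set_eqI)
  apply (simp add: image_iff)
  apply blast
  done



lemma fib_card:
  assumes "card S = 3"
  shows "card {(x,y,z). x \<noteq> y \<and> y \<noteq> z \<and> x \<noteq> z \<and> {x,y,z} = S} = 6"
proof -
  obtain u v w where S: "S = {u,v,w}" and d: "u \<noteq> v" "v \<noteq> w" "u \<noteq> w"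
    using assms card_3_iff by metis
  have "{(x,y,z). x \<noteq> y \<and> y \<noteq> z \<and> x \<noteq> z \<and> {x,y,z} = S} =
        {(u,v,w),(u,w,v),(v,u,w),(v,w,u),(w,u,v),(w,v,u)}"
  proof (rule set_eqI)
    fix t :: "'a \<times> 'a \<times> 'a"
    obtain x y z where t: "t = (x,y,z)" by (cases t) auto
    show "t \<in> {(x,y,z). x \<noteq> y \<and> y \<noteq> z \<and> x \<noteq> z \<and> {x,y,z} = S} \<longleftrightarrow>
          t \<in> {(u,v,w),(u,w,v),(v,u,w),(v,w,u),(w,u,v),(w,v,u)}"
    proof
      assume "t \<in> {(x,y,z). x \<noteq> y \<and> y \<noteq> z \<and> x \<noteq> z \<and> {x,y,z} = S}"
      hence h: "x \<noteq> y" "y \<noteq> z" "x \<noteq> z" "{x,y,z} = {u,v,w}" using t S by auto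
      have m: "x \<in> {u,v,w}" "y \<in> {u,v,w}" "z \<in> {u,v,w}" using h(4) by blast+
      have m2: "u \<in> {x,y,z}" "v \<in> {x,y,z}" "w \<in> {x,y,z}" using h(4) by blast+
      show "t \<in> {(u,v,w),(u,w,v),(v,u,w),(v,w,u),(w,u,v),(w,v,u)}"
        using m m2 h(1-3) d unfolding t by auto
    next
      assume "t \<in> {(u,v,w),(u,w,v),(v,u,w),(v,w,u),(w,u,v),(w,v,u)}"
      thus "t \<in> {(x,y,z). x \<noteq> y \<and> y \<noteq> z \<and> x \<noteq> z \<and> {x,y,z} = S}"
        using d unfolding t S by (auto simp: insert_commute)
    qed
  qed
  thus ?thesis using d by simp
qed

lemma card_ord3:
  assumes "finite F" "\<And>S. S \<in> F \<Longrightarrow> card S = 3"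
  shows "card {(x,y,z). x \<noteq> y \<and> y \<noteq> z \<and> x \<noteq> z \<and> {x,y,z} \<in> F} = 6 * card F"
proof -
  define fib where "fib S = {(x,y,z). x \<noteq> y \<and> y \<noteq> z \<and> x \<noteq> z \<and> {x,y,z} = S}" for S :: "'a set"
  have e: "{(x,y,z). x \<noteq> y \<and> y \<noteq> z \<and> x \<noteq> z \<and> {x,y,z} \<in> F} = (\<Union>S\<in>F. fib S)"
    unfolding fib_def by auto
  have c6: "S \<in> F \<Longrightarrow> card (fib S) = 6" for S
    unfolding fib_def using assms(2) fib_card by blast
  have "card (\<Union>S\<in>F. fib S) = (\<Sum>S\<in>F. card (fib S))"
  proof (rule card_UN_disjoint)
    show "finite F" by fact
    show "\<forall>S\<in>F. finite (fib S)" using c6 by (metis card_ge_0_finite zero_less_numeral)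
    show "\<forall>S\<in>F. \<forall>S'\<in>F. S \<noteq> S' \<longrightarrow> fib S \<inter> fib S' = {}" unfolding fib_def by auto
  qed
  also have "\<dots> = 6 * card F" using c6 by simp
  finally show ?thesis using e by simp
qed

definition TF :: "nat \<Rightarrow> ((int \<times> int) \<times> (int \<times> int) \<times> (int \<times> int)) set" where
  "TF n = {(x,y,z). x \<in> Vs n \<and> y \<in> Vs n \<and> z \<in> Vs n \<and> sc x y \<noteq> 0 \<and> sc y z \<noteq> 0 \<and> sc x z \<noteq> 0}"

definition cyc :: "int \<times> int \<Rightarrow> int \<times> int \<Rightarrow> int \<times> int \<Rightarrow> bool" where
  "cyc x y z \<longleftrightarrow> (sc x y > 0 \<and> sc y z > 0 \<and> sc z x > 0) \<or> (sc y x > 0 \<and> sc z y > 0 \<and> sc x z > 0)"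

definition CY :: "nat \<Rightarrow> ((int \<times> int) \<times> (int \<times> int) \<times> (int \<times> int)) set" where
  "CY n = {(x,y,z). (x,y,z) \<in> TF n \<and> cyc x y z}"

definition D3 :: "nat \<Rightarrow> (int \<times> int) \<times> (int \<times> int) \<times> (int \<times> int) \<Rightarrow> int list \<times> int list \<times> int list" where
  "D3 n = (\<lambda>(x,y,z). (D n x, D n y, D n z))"

lemma D_neq: "x \<in> Vs n \<Longrightarrow> y \<in> Vs n \<Longrightarrow> sc x y \<noteq> 0 \<Longrightarrow> D n x \<noteq> D n y"
  using inj_D[of n] sc_self[of x] by (metis inj_onD)

lemma ordT: "{(X,Y,Z). X \<noteq> Y \<and> Y \<noteq> Z \<and> X \<noteq> Z \<and> {X,Y,Z} \<in> tie_free_triples n} = D3 n ` TF n"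
proof (rule set_eqI)
  fix t :: "int list \<times> int list \<times> int list"
  obtain X Y Z where t: "t = (X,Y,Z)" by (cases t) auto
  show "t \<in> {(X,Y,Z). X \<noteq> Y \<and> Y \<noteq> Z \<and> X \<noteq> Z \<and> {X,Y,Z} \<in> tie_free_triples n} \<longleftrightarrow> t \<in> D3 n ` TF n"
  proof
    assume "t \<in> {(X,Y,Z). X \<noteq> Y \<and> Y \<noteq> Z \<and> X \<noteq> Z \<and> {X,Y,Z} \<in> tie_free_triples n}"
    hence h: "X \<noteq> Y" "Y \<noteq> Z" "X \<noteq> Z" "{X,Y,Z} \<subseteq> D n ` Vs n"
      "\<forall>A\<in>{X,Y,Z}. \<forall>B\<in>{X,Y,Z}. A \<noteq> B \<longrightarrow> \<not> ties A B"
      unfolding t tie_free_triples_def pod by auto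
    obtain x where x: "x \<in> Vs n" "X = D n x" using h(4) by auto
    obtain y where y: "y \<in> Vs n" "Y = D n y" using h(4) by auto
    obtain z where z: "z \<in> Vs n" "Z = D n z" using h(4) by auto
    have "sc x y \<noteq> 0" "sc y z \<noteq> 0" "sc x z \<noteq> 0"
      using h(1-3,5) x y z ties_sc by auto
    hence "(x,y,z) \<in> TF n" using x y z by (simp add: TF_def)
    thus "t \<in> D3 n ` TF n" unfolding t D3_def using x y z by force
  next
    assume "t \<in> D3 n ` TF n"
    then obtain x y z where xyz: "(x,y,z) \<in> TF n" and t2: "t = (D n x, D n y, D n z)"
      unfolding D3_def by auto
    have v: "x \<in> Vs n" "y \<in> Vs n" "z \<in> Vs n" and s: "sc x y \<noteq> 0" "sc y z \<noteq> 0" "sc x z \<noteq> 0"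
      using xyz by (auto simp: TF_def)
    have s2: "sc y x \<noteq> 0" "sc z y \<noteq> 0" "sc z x \<noteq> 0" using s sc_anti by (metis neg_equal_0_iff_equal)+
    have d: "D n x \<noteq> D n y" "D n y \<noteq> D n z" "D n x \<noteq> D n z" using D_neq v s by auto
    have nt: "\<forall>A\<in>{D n x, D n y, D n z}. \<forall>B\<in>{D n x, D n y, D n z}. A \<noteq> B \<longrightarrow> \<not> ties A B"
      using ties_sc v s s2 by auto
    have "{D n x, D n y, D n z} \<in> tie_free_triples n"
      unfolding tie_free_triples_def pod using v d nt by auto
    thus "t \<in> {(X,Y,Z). X \<noteq> Y \<and> Y \<noteq> Z \<and> X \<noteq> Z \<and> {X,Y,Z} \<in> tie_free_triples n}"
      using t2 d by auto
  qed
qed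

lemma beats_irrefl: "\<not> beats A A" by (simp add: beats_def)

lemma intrans_iff:
  assumes "X \<noteq> Y" "Y \<noteq> Z" "X \<noteq> Z"
  shows "intransitive {X,Y,Z} \<longleftrightarrow>
         (beats X Y \<and> beats Y Z \<and> beats Z X) \<or> (beats Y X \<and> beats Z Y \<and> beats X Z)"
proof
  assume "intransitive {X,Y,Z}"
  then obtain A B C where e: "{X,Y,Z} = {A,B,C}" and b: "beats A B" "beats B C" "beats C A"
    unfolding intransitive_def by blast
  have dd: "A \<noteq> B" "B \<noteq> C" "A \<noteq> C" using b beats_irrefl by metis+
  have m: "A \<in> {X,Y,Z}" "B \<in> {X,Y,Z}" "C \<in> {X,Y,Z}" using e by blast+
  show "(beats X Y \<and> beats Y Z \<and> beats Z X) \<or> (beats Y X \<and> beats Z Y \<and> beats X Z)"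
    using m dd b by auto
next
  assume "(beats X Y \<and> beats Y Z \<and> beats Z X) \<or> (beats Y X \<and> beats Z Y \<and> beats X Z)"
  thus "intransitive {X,Y,Z}"
  proof
    assume "beats X Y \<and> beats Y Z \<and> beats Z X"
    thus ?thesis unfolding intransitive_def by blast
  next
    assume "beats Y X \<and> beats Z Y \<and> beats X Z"
    hence "{X,Y,Z} = {Y,X,Z} \<and> beats Y X \<and> beats X Z \<and> beats Z Y" by (auto simp: insert_commute)
    thus ?thesis unfolding intransitive_def by blast
  qed
qed

definition bc :: "int list \<times> int list \<times> int list \<Rightarrow> bool" where
  "bc t = (case t of (X,Y,Z) \<Rightarrow> (beats X Y \<and> beats Y Z \<and> beats Z X) \<or> (beats Y X \<and> beats Z Y \<and> beats X Z))"

lemma ordI: "{(X,Y,Z). X \<noteq> Y \<and> Y \<noteq> Z \<and> X \<noteq> Z \<and> {X,Y,Z} \<in> intransitive_triples n} = D3 n ` CY n"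
proof (rule set_eqI)
  fix t :: "int list \<times> int list \<times> int list"
  obtain X Y Z where t: "t = (X,Y,Z)" by (cases t) auto
  have A: "t \<in> {(X,Y,Z). X \<noteq> Y \<and> Y \<noteq> Z \<and> X \<noteq> Z \<and> {X,Y,Z} \<in> intransitive_triples n}
      \<longleftrightarrow> t \<in> {(X,Y,Z). X \<noteq> Y \<and> Y \<noteq> Z \<and> X \<noteq> Z \<and> {X,Y,Z} \<in> tie_free_triples n} \<and> bc t"
  proof (cases "X \<noteq> Y \<and> Y \<noteq> Z \<and> X \<noteq> Z")
    case True
    then show ?thesis unfolding t intransitive_triples_def bc_def
      using intrans_iff[of X Y Z] by simp
  next
    case False
    then show ?thesis unfolding t by auto
  qed
  have B: "t \<in> D3 n ` TF n \<and> bc t \<longleftrightarrow> t \<in> D3 n ` CY n"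
  proof
    assume "t \<in> D3 n ` TF n \<and> bc t"
    then obtain x y z where s: "(x,y,z) \<in> TF n" "t = (D n x, D n y, D n z)" "bc t"
      unfolding D3_def by auto
    have v: "x \<in> Vs n" "y \<in> Vs n" "z \<in> Vs n" using s(1) by (auto simp: TF_def)
    have "cyc x y z" using s(3) unfolding s(2) bc_def cyc_def using v by (simp add: beats_sc)
    hence "(x,y,z) \<in> CY n" using s(1) by (simp add: CY_def)
    thus "t \<in> D3 n ` CY n" using s(2) unfolding D3_def by force
  next
    assume "t \<in> D3 n ` CY n"
    then obtain x y z where s: "(x,y,z) \<in> CY n" "t = (D n x, D n y, D n z)"
      unfolding D3_def by auto
    have tf: "(x,y,z) \<in> TF n" and c: "cyc x y z" using s(1) by (auto simp: CY_def)
    have v: "x \<in> Vs n" "y \<in> Vs n" "z \<in> Vs n" using tf by (auto simp: TF_def)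
    have "bc t" using c unfolding s(2) bc_def cyc_def using v by (simp add: beats_sc)
    moreover have "t \<in> D3 n ` TF n" using tf s(2) unfolding D3_def by force
    ultimately show "t \<in> D3 n ` TF n \<and> bc t" by simp
  qed
  show "t \<in> {(X,Y,Z). X \<noteq> Y \<and> Y \<noteq> Z \<and> X \<noteq> Z \<and> {X,Y,Z} \<in> intransitive_triples n} \<longleftrightarrow> t \<in> D3 n ` CY n"
    using A B unfolding ordT by simp
qed

lemma finite_tf: "finite (tie_free_triples n)"
proof -
  have "tie_free_triples n \<subseteq> Pow (proper_one_step_dice n)" unfolding tie_free_triples_def by auto
  moreover have "finite (proper_one_step_dice n)" unfolding pod using finite_Vs by simp
  ultimately show ?thesis by (meson finite_Pow_iff finite_subset)
qed

lemma inj_D3: "inj_on (D3 n) (TF n)"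
  using inj_D[of n] unfolding inj_on_def D3_def TF_def by auto

lemma card_TF: "card (TF n) = 6 * card (tie_free_triples n)"
proof -
  have "card (TF n) = card (D3 n ` TF n)" using inj_D3 by (simp add: card_image)
  also have "\<dots> = 6 * card (tie_free_triples n)"
    unfolding ordT[symmetric] by (rule card_ord3[OF finite_tf]) (auto simp: tie_free_triples_def)
  finally show ?thesis .
qed

lemma card_CY: "card (CY n) = 6 * card (intransitive_triples n)"
proof -
  have "CY n \<subseteq> TF n" unfolding CY_def by auto
  hence "card (CY n) = card (D3 n ` CY n)" using inj_on_subset[OF inj_D3] by (simp add: card_image)
  also have "\<dots> = 6 * card (intransitive_triples n)"
    unfolding ordI[symmetric]
    by (rule card_ord3) (auto simp: intransitive_triples_def tie_free_triples_def
        intro: finite_subset[OF _ finite_tf])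
  finally show ?thesis .
qed



definition dbl :: "int \<times> int \<Rightarrow> bool" where "dbl x \<longleftrightarrow> snd x = fst x + 2"
definition swp :: "int \<times> int \<Rightarrow> int \<times> int" where "swp x = (snd x - 1, fst x + 1)"

lemma sc_swp1: "\<not> dbl x \<Longrightarrow> sc (swp x) y = - sc x y"
  unfolding sc_def swp_def dbl_def using score_swap by simp

lemma sc_swp2: "\<not> dbl y \<Longrightarrow> sc x (swp y) = - sc x y"
  using sc_swp1[of y x] sc_anti by (metis minus_minus)

lemma swp_Vs: "x \<in> Vs n \<Longrightarrow> \<not> dbl x \<Longrightarrow> swp x \<in> Vs n"
  unfolding Vs_def valid_def swp_def dbl_def by auto

lemma swp_ndbl: "x \<in> Vs n \<Longrightarrow> \<not> dbl (swp x)"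
  unfolding Vs_def valid_def swp_def dbl_def by auto

lemma swp_swp: "swp (swp x) = x"
  unfolding swp_def by simp

definition B2 :: "nat \<Rightarrow> ((int \<times> int) \<times> (int \<times> int) \<times> (int \<times> int)) set" where
  "B2 n = {(x,y,z). (x,y,z) \<in> TF n \<and> ((dbl x \<and> dbl y) \<or> (dbl y \<and> dbl z) \<or> (dbl x \<and> dbl z))}"

definition GG :: "nat \<Rightarrow> ((int \<times> int) \<times> (int \<times> int) \<times> (int \<times> int)) set" where
  "GG n = TF n - B2 n"

definition sg1 :: "(int \<times> int) \<times> (int \<times> int) \<times> (int \<times> int) \<Rightarrow> (int \<times> int) \<times> (int \<times> int) \<times> (int \<times> int)" where
  "sg1 t = (case t of (x,y,z) \<Rightarrow> if \<not> dbl x then (swp x, y, z) else (x, swp y, z))"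
definition sg2 :: "(int \<times> int) \<times> (int \<times> int) \<times> (int \<times> int) \<Rightarrow> (int \<times> int) \<times> (int \<times> int) \<times> (int \<times> int)" where
  "sg2 t = (case t of (x,y,z) \<Rightarrow> if \<not> dbl z then (x, y, swp z) else (x, swp y, z))"

lemma GG_mem: "(x,y,z) \<in> GG n \<longleftrightarrow> x \<in> Vs n \<and> y \<in> Vs n \<and> z \<in> Vs n \<and> sc x y \<noteq> 0 \<and> sc y z \<noteq> 0 \<and> sc x z \<noteq> 0
   \<and> \<not> ((dbl x \<and> dbl y) \<or> (dbl y \<and> dbl z) \<or> (dbl x \<and> dbl z))"
  unfolding GG_def B2_def TF_def by auto

lemma sg1_GG: "t \<in> GG n \<Longrightarrow> sg1 t \<in> GG n"
  by (cases t) (auto simp: GG_mem sg1_def swp_Vs swp_ndbl sc_swp1 sc_swp2)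

lemma sg2_GG: "t \<in> GG n \<Longrightarrow> sg2 t \<in> GG n"
  by (cases t) (auto simp: GG_mem sg2_def swp_Vs swp_ndbl sc_swp1 sc_swp2)

lemma sg1_inv: "t \<in> GG n \<Longrightarrow> sg1 (sg1 t) = t"
  by (cases t) (auto simp: GG_mem sg1_def swp_swp swp_ndbl)

lemma sg2_inv: "t \<in> GG n \<Longrightarrow> sg2 (sg2 t) = t"
  by (cases t) (auto simp: GG_mem sg2_def swp_swp swp_ndbl)

definition cycf :: "int \<Rightarrow> int \<Rightarrow> int \<Rightarrow> bool" where
  "cycf s1 s2 s3 \<longleftrightarrow> (s1 > 0 \<and> s2 > 0 \<and> s3 < 0) \<or> (s1 < 0 \<and> s2 < 0 \<and> s3 > 0)"

lemma cyc_cycf: "cyc x y z \<longleftrightarrow> cycf (sc x y) (sc y z) (sc x z)"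
  unfolding cyc_def cycf_def sc_anti[of x y] sc_anti[of y z] sc_anti[of x z] by linarith

lemma cycf_sum: "s1 \<noteq> 0 \<Longrightarrow> s2 \<noteq> 0 \<Longrightarrow> s3 \<noteq> 0 \<Longrightarrow>
  ind (cycf s1 s2 s3) + ind (cycf (-s1) (-s2) s3) + ind (cycf s1 (-s2) (-s3)) + ind (cycf (-s1) s2 (-s3)) = 1"
  by (cases "s1 > 0"; cases "s2 > 0"; cases "s3 > 0") (auto simp: cycf_def ind_def)

definition cyct :: "(int \<times> int) \<times> (int \<times> int) \<times> (int \<times> int) \<Rightarrow> int" where
  "cyct t = (case t of (x,y,z) \<Rightarrow> ind (cyc x y z))"

lemma orbit_sum: "t \<in> GG n \<Longrightarrow> cyct t + cyct (sg1 t) + cyct (sg2 t) + cyct (sg1 (sg2 t)) = 1"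
proof -
  assume tG: "t \<in> GG n"
  obtain x y z where t: "t = (x,y,z)" by (cases t) auto
  have h: "sc x y \<noteq> 0" "sc y z \<noteq> 0" "sc x z \<noteq> 0"
    "\<not> ((dbl x \<and> dbl y) \<or> (dbl y \<and> dbl z) \<or> (dbl x \<and> dbl z))"
    and v: "x \<in> Vs n" "y \<in> Vs n" "z \<in> Vs n" using tG t by (auto simp: GG_mem)
  note S = cycf_sum[OF h(1-3)]
  consider "dbl x" | "\<not> dbl x" "dbl z" | "\<not> dbl x" "\<not> dbl z" by blast
  thus ?thesis
  proof cases
    case 1
    hence "\<not> dbl y" "\<not> dbl z" using h(4) by auto
    thus ?thesis using 1 S unfolding t
      by (simp add: sg1_def sg2_def cyct_def cyc_cycf sc_swp1 sc_swp2 swp_ndbl v algebra_simps)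
  next
    case 2
    hence "\<not> dbl y" using h(4) by auto
    thus ?thesis using 2 S unfolding t
      by (simp add: sg1_def sg2_def cyct_def cyc_cycf sc_swp1 sc_swp2 swp_ndbl v algebra_simps)
  next
    case 3
    thus ?thesis using S unfolding t
      by (simp add: sg1_def sg2_def cyct_def cyc_cycf sc_swp1 sc_swp2 swp_ndbl v algebra_simps)
  qed
qed

lemma sum_inv:
  assumes "\<And>t. t \<in> A \<Longrightarrow> s t \<in> A" "\<And>t. t \<in> A \<Longrightarrow> s' (s t) = t"
          "\<And>t. t \<in> A \<Longrightarrow> s' t \<in> A" "\<And>t. t \<in> A \<Longrightarrow> s (s' t) = t"
  shows "(\<Sum>t\<in>A. f (s t)) = (\<Sum>t\<in>A. (f t :: int))"
  by (rule sum.reindex_bij_witness[where i=s' and j=s]) (use assms in auto)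

lemma GG_quarter: "4 * card {t \<in> GG n. cyct t = 1} = card (GG n)"
proof -
  have fin: "finite (GG n)"
  proof -
    have "TF n \<subseteq> Vs n \<times> Vs n \<times> Vs n" by (auto simp: TF_def)
    hence "finite (TF n)" using finite_Vs by (meson finite_SigmaI finite_subset)
    thus ?thesis unfolding GG_def by simp
  qed
  have s1: "(\<Sum>t\<in>GG n. cyct (sg1 t)) = (\<Sum>t\<in>GG n. cyct t)"
    by (rule sum_inv[where s'=sg1]) (auto simp: sg1_GG sg1_inv)
  have s2: "(\<Sum>t\<in>GG n. cyct (sg2 t)) = (\<Sum>t\<in>GG n. cyct t)"
    by (rule sum_inv[where s'=sg2]) (auto simp: sg2_GG sg2_inv)
  have s3: "(\<Sum>t\<in>GG n. cyct (sg1 (sg2 t))) = (\<Sum>t\<in>GG n. cyct t)"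
    by (rule sum_inv[where s'="\<lambda>t. sg2 (sg1 t)"]) (metis sg1_GG sg1_inv sg2_GG sg2_inv)+
  have "(\<Sum>t\<in>GG n. cyct t + cyct (sg1 t) + cyct (sg2 t) + cyct (sg1 (sg2 t))) = (\<Sum>t\<in>GG n. 1)"
    using orbit_sum by (rule sum.cong[OF refl])
  hence "4 * (\<Sum>t\<in>GG n. cyct t) = int (card (GG n))"
    using s1 s2 s3 by (simp add: sum.distrib)
  moreover have "(\<Sum>t\<in>GG n. cyct t) = int (card {t \<in> GG n. cyct t = 1})"
  proof -
    have "(\<Sum>t\<in>GG n. cyct t) = (\<Sum>t\<in>GG n. ind (cyct t = 1))"
      by (rule sum.cong) (auto simp: cyct_def ind_def)
    thus ?thesis using sum_ind[OF fin] by simp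
  qed
  ultimately show ?thesis by linarith
qed



definition EE :: "nat \<Rightarrow> ((int \<times> int) \<times> (int \<times> int) \<times> (int \<times> int)) set" where
  "EE n = {(u,v,w). u \<in> Vs n \<and> v \<in> Vs n \<and> w \<in> Vs n \<and> dbl u \<and> dbl v \<and> sc u v \<noteq> 0 \<and> sc u w \<noteq> 0}"

definition F1 :: "int \<times> int \<times> int \<times> int \<Rightarrow> (int \<times> int) \<times> (int \<times> int) \<times> (int \<times> int)" where
  "F1 q = (case q of (p,i,j,d) \<Rightarrow> ((p,p+2),(p+i,p+i+2),(p+j,d)))"
definition F2 :: "int \<times> int \<times> int \<times> int \<Rightarrow> (int \<times> int) \<times> (int \<times> int) \<times> (int \<times> int)" where
  "F2 q = (case q of (p,i,j,c) \<Rightarrow> ((p,p+2),(p+i,p+i+2),(c,p+j)))"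

lemma EE_sub: "EE n \<subseteq> F1 ` ({1..int n} \<times> {-2..2} \<times> {-1..3} \<times> {1..int n})
                    \<union> F2 ` ({1..int n} \<times> {-2..2} \<times> {-1..3} \<times> {1..int n})"
proof
  fix t assume tE: "t \<in> EE n"
  obtain u v w where t: "t = (u,v,w)" by (cases t) auto
  obtain p q where u: "u = (p,q)" by (cases u)
  obtain r s where v: "v = (r,s)" by (cases v)
  obtain c d where w: "w = (c,d)" by (cases w)
  have h: "valid n (p,q)" "valid n (r,s)" "valid n (c,d)" "q = p + 2" "s = r + 2"
     "score p q r s \<noteq> 0" "score p q c d \<noteq> 0"
    using tE unfolding t u v w EE_def Vs_def dbl_def sc_def by auto
  have a1: "\<bar>p-r\<bar> = 1 \<or> \<bar>p-(s-1)\<bar> = 1 \<or> \<bar>q-1-r\<bar> = 1 \<or> \<bar>q-1-(s-1)\<bar> = 1"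
    using score_adj[OF h(6)] .
  have a2: "\<bar>p-c\<bar> = 1 \<or> \<bar>p-(d-1)\<bar> = 1 \<or> \<bar>q-1-c\<bar> = 1 \<or> \<bar>q-1-(d-1)\<bar> = 1"
    using score_adj[OF h(7)] .
  have ri: "r - p \<in> {-2..2}" using a1 h(4,5) by (auto simp: abs_if split: if_splits)
  have cd: "c - p \<in> {-1..3} \<or> d - p \<in> {-1..3}" using a2 h(4) by (auto simp: abs_if split: if_splits)
  have rng: "p \<in> {1..int n}" "c \<in> {1..int n}" "d \<in> {1..int n}" using h(1,3) by (auto simp: valid_def)
  show "t \<in> F1 ` ({1..int n} \<times> {-2..2} \<times> {-1..3} \<times> {1..int n})
                    \<union> F2 ` ({1..int n} \<times> {-2..2} \<times> {-1..3} \<times> {1..int n})"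
  proof (cases "c - p \<in> {-1..3}")
    case True
    have "t = F1 (p, r-p, c-p, d)" unfolding t u v w F1_def using h(4,5) by simp
    moreover have "(p, r-p, c-p, d) \<in> {1..int n} \<times> {-2..2} \<times> {-1..3} \<times> {1..int n}"
      using True ri rng by simp
    ultimately show ?thesis by blast
  next
    case False
    hence dd: "d - p \<in> {-1..3}" using cd by blast
    have "t = F2 (p, r-p, d-p, c)" unfolding t u v w F2_def using h(4,5) by simp
    moreover have "(p, r-p, d-p, c) \<in> {1..int n} \<times> {-2..2} \<times> {-1..3} \<times> {1..int n}"
      using dd ri rng by simp
    ultimately show ?thesis by blast
  qed
qed

lemma card_EE: "card (EE n) \<le> 50 * n^2"
proof -
  let ?Q = "{1..int n} \<times> {-2..2::int} \<times> {-1..3::int} \<times> {1..int n}"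
  have cQ: "card ?Q = n * 5 * 5 * n" by (simp add: card_cartesian_product)
  have "card (EE n) \<le> card (F1 ` ?Q \<union> F2 ` ?Q)"
    by (rule card_mono[OF _ EE_sub]) simp
  also have "\<dots> \<le> card (F1 ` ?Q) + card (F2 ` ?Q)" by (rule card_Un_le)
  also have "\<dots> \<le> card ?Q + card ?Q" by (intro add_mono card_image_le) simp_all
  also have "\<dots> = 50 * n^2" using cQ by (simp add: power2_eq_square)
  finally show ?thesis .
qed

definition rot1 :: "(int \<times> int) \<times> (int \<times> int) \<times> (int \<times> int) \<Rightarrow> (int \<times> int) \<times> (int \<times> int) \<times> (int \<times> int)" where
  "rot1 t = (case t of (u,v,w) \<Rightarrow> (w,u,v))"
definition rot2 :: "(int \<times> int) \<times> (int \<times> int) \<times> (int \<times> int) \<Rightarrow> (int \<times> int) \<times> (int \<times> int) \<times> (int \<times> int)" where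
  "rot2 t = (case t of (u,v,w) \<Rightarrow> (u,w,v))"

lemma B2_sub: "B2 n \<subseteq> EE n \<union> rot1 ` EE n \<union> rot2 ` EE n"
proof
  fix t assume tB: "t \<in> B2 n"
  obtain x y z where t: "t = (x,y,z)" by (cases t) auto
  have h: "x \<in> Vs n" "y \<in> Vs n" "z \<in> Vs n" "sc x y \<noteq> 0" "sc y z \<noteq> 0" "sc x z \<noteq> 0"
    "(dbl x \<and> dbl y) \<or> (dbl y \<and> dbl z) \<or> (dbl x \<and> dbl z)"
    using tB unfolding t B2_def TF_def by auto
  have h2: "sc y x \<noteq> 0" "sc z y \<noteq> 0" "sc z x \<noteq> 0" using h(4-6) sc_anti by (metis neg_equal_0_iff_equal)+
  consider "dbl x \<and> dbl y" | "dbl y \<and> dbl z" | "dbl x \<and> dbl z" using h(7) by blast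
  thus "t \<in> EE n \<union> rot1 ` EE n \<union> rot2 ` EE n"
  proof cases
    case 1 thus ?thesis using h unfolding t EE_def by simp
  next
    case 2
    hence "(y,z,x) \<in> EE n" using h h2 unfolding EE_def by simp
    moreover have "t = rot1 (y,z,x)" unfolding t rot1_def by simp
    ultimately show ?thesis by blast
  next
    case 3
    hence "(x,z,y) \<in> EE n" using h h2 unfolding EE_def by simp
    moreover have "t = rot2 (x,z,y)" unfolding t rot2_def by simp
    ultimately show ?thesis by blast
  qed
qed

lemma finite_EE: "finite (EE n)"
proof -
  have "EE n \<subseteq> Vs n \<times> Vs n \<times> Vs n" by (auto simp: EE_def)
  thus ?thesis using finite_Vs by (meson finite_SigmaI finite_subset)
qed

lemma card_B2: "card (B2 n) \<le> 150 * n^2"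
proof -
  have "card (B2 n) \<le> card (EE n \<union> rot1 ` EE n \<union> rot2 ` EE n)"
    by (rule card_mono[OF _ B2_sub]) (simp add: finite_EE)
  also have "\<dots> \<le> card (EE n) + card (rot1 ` EE n) + card (rot2 ` EE n)"
    by (metis (no_types, lifting) add_le_mono card_Un_le le_refl order_trans)
  also have "\<dots> \<le> card (EE n) + card (EE n) + card (EE n)"
    by (intro add_mono card_image_le finite_EE le_refl)
  also have "\<dots> \<le> 150 * n^2" using card_EE[of n] by simp
  finally show ?thesis .
qed



definition Fm :: "int \<times> int \<times> int \<Rightarrow> (int \<times> int) \<times> (int \<times> int) \<times> (int \<times> int)" where
  "Fm q = (case q of (x,y,z) \<Rightarrow> ((x,y+1),(x+1,z+1),(y+1,z+2)))"

lemma Fm_sub: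
  assumes "m = (int n - 8) div 3"
  shows "Fm ` ({1..m} \<times> {m+4..2*m+3} \<times> {2*m+7..3*m+6}) \<subseteq> TF n"
proof
  fix t assume "t \<in> Fm ` ({1..m} \<times> {m+4..2*m+3} \<times> {2*m+7..3*m+6})"
  then obtain x y z where r: "x \<in> {1..m}" "y \<in> {m+4..2*m+3}" "z \<in> {2*m+7..3*m+6}"
    and t: "t = Fm (x,y,z)" by auto
  have m3: "3 * m + 8 \<le> int n" using assms by linarith
  have g: "y - x \<ge> 4" "z - y \<ge> 4" using r by auto
  show "t \<in> TF n"
    unfolding t Fm_def TF_def Vs_def valid_def sc_def
    using r m3 score_fam[OF g] by auto
qed

lemma card_TF_lower: "card (TF n) \<ge> (nat ((int n - 8) div 3))^3"
proof -
  define m where "m = (int n - 8) div 3"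
  let ?Q = "{1..m} \<times> {m+4..2*m+3} \<times> {2*m+7..3*m+6}"
  have inj: "inj_on Fm ?Q" unfolding inj_on_def Fm_def by auto
  have cQ: "card ?Q = nat m * nat m * nat m"
    by (simp add: card_cartesian_product)
  have fin: "finite (TF n)"
  proof -
    have "TF n \<subseteq> Vs n \<times> Vs n \<times> Vs n" by (auto simp: TF_def)
    thus ?thesis using finite_Vs by (meson finite_SigmaI finite_subset)
  qed
  have "card ?Q = card (Fm ` ?Q)" using inj by (simp add: card_image)
  also have "\<dots> \<le> card (TF n)" using card_mono[OF fin Fm_sub[OF m_def]] .
  finally show ?thesis using cQ unfolding m_def by (simp add: power3_eq_cube)
qed



lemma finite_TF: "finite (TF n)"
proof -
  have "TF n \<subseteq> Vs n \<times> Vs n \<times> Vs n" by (auto simp: TF_def)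
  thus ?thesis using finite_Vs by (meson finite_SigmaI finite_subset)
qed

lemma decomp:
  "card (TF n) = card (GG n) + card (B2 n)"
  "4 * card (CY n) = card (GG n) + 4 * card (CY n \<inter> B2 n)"
  "card (CY n \<inter> B2 n) \<le> card (B2 n)"
proof -
  have sub: "B2 n \<subseteq> TF n" by (auto simp: B2_def)
  have fB: "finite (B2 n)" using finite_TF finite_subset sub by blast
  show "card (TF n) = card (GG n) + card (B2 n)"
    unfolding GG_def using card_Diff_subset[OF fB sub] card_mono[OF finite_TF sub] by simp
  have CT: "CY n \<subseteq> TF n" unfolding CY_def by auto
  have fC: "finite (CY n)" using finite_TF finite_subset CT by blast
  have mc: "t \<in> CY n \<longleftrightarrow> t \<in> TF n \<and> cyct t = 1" for t
    by (cases t) (simp add: CY_def cyct_def ind_def)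
  have e: "CY n = {t \<in> GG n. cyct t = 1} \<union> (CY n \<inter> B2 n)"
    unfolding GG_def using mc by blast
  have "card (CY n) = card {t \<in> GG n. cyct t = 1} + card (CY n \<inter> B2 n)"
    apply (subst e, rule card_Un_disjoint)
    using fC finite_TF unfolding GG_def by auto
  thus "4 * card (CY n) = card (GG n) + 4 * card (CY n \<inter> B2 n)"
    using GG_quarter[of n] by simp
  show "card (CY n \<inter> B2 n) \<le> card (B2 n)" by (intro card_mono fB) auto
qed

lemma ratio_bound:
  assumes "n \<ge> 20"
  shows "\<bar>real (card (CY n)) / real (card (TF n)) - 1/4\<bar> \<le> 32400 / real n"
proof -
  define m where "m = (int n - 8) div 3"
  have m3: "int n - 10 \<le> 3 * m" unfolding m_def by presburger
  have "real_of_int (int n - 10) \<le> real_of_int (3 * m)" using m3 by (simp only: of_int_le_iff)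
  hence mpos: "real_of_int m \<ge> (real n - 10) / 3" by simp
  have mp: "m \<ge> 1" unfolding m_def using assms by linarith
  have rm: "real (nat m) \<ge> (real n - 10) / 3" using mpos mp by simp
  have n10: "real n - 10 > 0" using assms by simp
  have T: "real (card (TF n)) \<ge> ((real n - 10) / 3) ^ 3"
  proof -
    have "((real n - 10) / 3) ^ 3 \<le> real (nat m) ^ 3"
      by (rule power_mono[OF rm]) (use n10 in simp)
    also have "\<dots> \<le> real (card (TF n))" using card_TF_lower[of n] unfolding m_def
      by (metis of_nat_le_iff of_nat_power)
    finally show ?thesis .
  qed
  have Tpos: "real (card (TF n)) > 0" using T n10 by (smt (verit) zero_less_power divide_pos_pos)
  define g where "g = real (card (GG n))"
  define b where "b = real (card (B2 n))"
  define c where "c = real (card (CY n \<inter> B2 n))"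
  have eT: "real (card (TF n)) = g + b" unfolding g_def b_def using decomp(1)[of n] by simp
  have eC: "4 * real (card (CY n)) = g + 4 * c" unfolding g_def c_def
    using decomp(2)[of n] by (metis of_nat_add of_nat_mult of_nat_numeral)
  have cb: "0 \<le> c" "c \<le> b" unfolding c_def b_def using decomp(3)[of n] by simp_all
  have bB: "b \<le> 150 * real n ^ 2" unfolding b_def using card_B2[of n]
    by (metis of_nat_le_iff of_nat_mult of_nat_numeral of_nat_power)
  have "real (card (CY n)) / real (card (TF n)) - 1/4 = (c - b/4) / real (card (TF n))"
    using eT eC Tpos by (simp add: field_simps)
  hence "\<bar>real (card (CY n)) / real (card (TF n)) - 1/4\<bar> = \<bar>c - b/4\<bar> / real (card (TF n))"
    using Tpos by simp
  also have "\<dots> \<le> b / real (card (TF n))"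
    using cb Tpos by (intro divide_right_mono) auto
  also have "\<dots> \<le> (150 * real n ^ 2) / ((real n - 10) / 3) ^ 3"
    using bB T Tpos cb n10 by (intro frac_le) auto
  also have "\<dots> \<le> (150 * real n ^ 2) / (real n / 6) ^ 3"
  proof (rule frac_le)
    have "real n / 6 \<le> (real n - 10) / 3" using assms by simp
    thus "(real n / 6) ^ 3 \<le> ((real n - 10) / 3) ^ 3" by (rule power_mono) simp
    show "0 < (real n / 6) ^ 3" using assms by simp
  qed auto
  also have "\<dots> = 32400 / real n"
    using assms by (simp add: power_divide field_simps power2_eq_square power3_eq_cube)
  finally show ?thesis .
qed

lemma ratio_eq: "real (card (intransitive_triples n)) / real (card (tie_free_triples n))
     = real (card (CY n)) / real (card (TF n))"
  unfolding card_TF card_CY by simp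

theorem mainTheorem4:
  shows "(\<lambda>n. real (card (intransitive_triples n)) / real (card (tie_free_triples n)))
           \<longlonglongrightarrow> 1 / 4"
proof -
  define B where "B n = 32400 / real n" for n :: nat
  have B0: "B \<longlonglongrightarrow> 0" unfolding B_def by (rule lim_const_over_n)
  have ev: "eventually (\<lambda>n. \<bar>real (card (CY n)) / real (card (TF n)) - 1/4\<bar> \<le> B n) sequentially"
    unfolding B_def using ratio_bound eventually_at_top_linorder by blast
  have "(\<lambda>n. real (card (CY n)) / real (card (TF n))) \<longlonglongrightarrow> 1/4"
  proof (rule tendsto_sandwich)
    show "eventually (\<lambda>n. 1/4 - B n \<le> real (card (CY n)) / real (card (TF n))) sequentially"
      using ev by eventually_elim linarith
    show "eventually (\<lambda>n. real (card (CY n)) / real (card (TF n)) \<le> 1/4 + B n) sequentially"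
      using ev by eventually_elim linarith
    show "(\<lambda>n. 1/4 - B n) \<longlonglongrightarrow> 1/4" using tendsto_diff[OF tendsto_const B0] by simp
    show "(\<lambda>n. 1/4 + B n) \<longlonglongrightarrow> 1/4" using tendsto_add[OF tendsto_const B0] by simp
  qed
  thus ?thesis unfolding ratio_eq .
qed

end
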